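(* Let $d\ge 1$ and $n\ge 1$. For a sequence $w=(i_1,\dots,i_n)$ which is a permutation of $[n]$, let $M_w(f_1,\dots,f_n)=f_{i_1}\vartriangleleft(f_{i_2}\vartriangleleft(\cdots\vartriangleleft(f_{i_{n-1}}\vartriangleleft f_{i_n})\cdots))$ and let $\ell_w\in\mathrm{RT}(n)$ be the linear tree with root $i_1$ in which $i_{m+1}$ is the unique child of $i_m$ for $m<n$. Then $w\mapsto\ell_w$ is a bijection from permutations of $[n]$ onto the linear trees in $\mathrm{RT}(n)$, $F(\ell_w)(f_1,\dots,f_n)=M_w(f_1,\dots,f_n)$ for all $f_1,\dots,f_n\in\mathcal{C}_d$, and for every family of real coefficients $(\lambda_w)_w$, the expression $\sum_w\lambda_w M_w$ is a left identity of the Witt algebra $W_d$ (i.e. vanishes for all $f_1,\dots,f_n\in W_d$) if and only if $\sum_w\lambda_w F(\ell_w)=0$ as a map $\mathcal{C}_d^n\to\mathcal{C}_d$. Hence left identities of $W_d$ correspond one-to-one to linear relations among elementary differentials of linear trees.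
   Context: A rooted tree on a finite vertex set $V\subset\mathbb{N}$ is a set $E$ of ordered pairs (an edge $(v,w)$ means $w$ is a child of $v$) such that exactly one vertex (the root) has no parent, every other vertex has exactly one parent, and every vertex is connected to the root by following parents; it is linear if every vertex has at most one child. $\mathrm{RT}(n)$ is the set of rooted trees on $[n]$; $\tau_v$ is the subtree of $v$ and its descendants. $\mathcal{C}_d=C^\infty(\mathbb{R}^d,\mathbb{R}^d)$, $g_j$ the $j$-th coordinate, $\partial_j=\partial/\partial x_j$. For $\tau$ with root $r$ whose children are $v_1,\dots,v_k$, recursively $F(\tau)((f^i)_{i\in V})=\sum_{j_1,\dots,j_k=1}^d F(\tau_{v_1})(\cdots)_{j_1}\cdots F(\tau_{v_k})(\cdots)_{j_k}\,\partial_{j_1}\cdots\partial_{j_k}f^r$, where $F(\tau_{v_m})$ is evaluated on the $f^i$ with $i$ a vertex of $\tau_{v_m}$ (single vertex: $F(\tau)=f^r$). The Witt algebra $W_d$ is the space of polynomial maps $\mathbb{R}^d\to\mathbb{R}^d$ with product $f\vartriangleleft g=\sum_{i=1}^d g_i\,\partial_i f$ (the same formula defines $\vartriangleleft$ on $\mathcal{C}_d$). A left identity of arity $n$ is a linear combination of the multilinear expressions $M_w$ (all compositions in the right input) that vanishes identically on $W_d$. *)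

theory Defs
  imports "HOL-Analysis.Analysis" "HOL-Combinatorics.Multiset_Permutations"
begin

type_synonym 'd vf = "real^'d \<Rightarrow> real^'d"

text \<open>E is a set of ordered pairs (v,w) meaning w is a child of v.\<close>

definition is_tree_root :: "nat set \<Rightarrow> (nat \<times> nat) set \<Rightarrow> nat \<Rightarrow> bool" where
  "is_tree_root V E r \<longleftrightarrow> r \<in> V \<and> (\<forall>u. (u, r) \<notin> E)"

definition rooted_tree :: "nat set \<Rightarrow> (nat \<times> nat) set \<Rightarrow> bool" where
  "rooted_tree V E \<longleftrightarrow> finite V \<and> E \<subseteq> V \<times> V \<and>
     (\<exists>!r. is_tree_root V E r) \<and>
     (\<forall>v\<in>V. \<not> is_tree_root V E v \<longrightarrow> (\<exists>!u. (u, v) \<in> E)) \<and>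
     (\<forall>r. is_tree_root V E r \<longrightarrow> (\<forall>v\<in>V. (r, v) \<in> E\<^sup>*))"

definition tree_root :: "nat set \<Rightarrow> (nat \<times> nat) set \<Rightarrow> nat" where
  "tree_root V E = (THE r. is_tree_root V E r)"

definition RT :: "nat \<Rightarrow> (nat \<times> nat) set set" where
  "RT n = {E. rooted_tree {1..n} E}"

definition linear_tree :: "(nat \<times> nat) set \<Rightarrow> bool" where
  "linear_tree E \<longleftrightarrow> (\<forall>v w w'. (v, w) \<in> E \<longrightarrow> (v, w') \<in> E \<longrightarrow> w = w')"

definition children :: "(nat \<times> nat) set \<Rightarrow> nat \<Rightarrow> nat set" where
  "children E v = {w. (v, w) \<in> E}"

definition partial :: "'d::finite \<Rightarrow> (real^'d \<Rightarrow> 'a::real_normed_vector) \<Rightarrow> real^'d \<Rightarrow> 'a" where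
  "partial j g x = vector_derivative (\<lambda>t. g (x + t *\<^sub>R axis j 1)) (at 0)"

fun partials :: "'d::finite list \<Rightarrow> (real^'d \<Rightarrow> 'a::real_normed_vector) \<Rightarrow> real^'d \<Rightarrow> 'a" where
  "partials [] g = g"
| "partials (j # js) g = partial j (partials js g)"

definition smooth :: "'d::finite vf \<Rightarrow> bool" where
  "smooth g \<longleftrightarrow> (\<forall>js::'d list. continuous_on UNIV (partials js g) \<and>
      (\<forall>j x. ((\<lambda>t. partials js g (x + t *\<^sub>R axis j 1)) has_vector_derivative
               partials (j # js) g x) (at 0)))"

inductive poly_fun :: "(real^'d::finite \<Rightarrow> real) \<Rightarrow> bool" where
  pf_const: "poly_fun (\<lambda>x. c)"
| pf_coord: "poly_fun (\<lambda>x. x $ j)"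
| pf_add: "poly_fun p \<Longrightarrow> poly_fun q \<Longrightarrow> poly_fun (\<lambda>x. p x + q x)"
| pf_mult: "poly_fun p \<Longrightarrow> poly_fun q \<Longrightarrow> poly_fun (\<lambda>x. p x * q x)"

definition witt :: "'d::finite vf \<Rightarrow> bool" where
  "witt g \<longleftrightarrow> (\<forall>j. poly_fun (\<lambda>x. g x $ j))"

definition wprod :: "'d::finite vf \<Rightarrow> 'd vf \<Rightarrow> 'd vf" where
  "wprod f g = (\<lambda>x. \<Sum>i\<in>UNIV. g x $ i *\<^sub>R partial i f x)"

fun Mw :: "nat list \<Rightarrow> (nat \<Rightarrow> 'd::finite vf) \<Rightarrow> 'd vf" where
  "Mw [] f = (\<lambda>x. 0)"
| "Mw [i] f = f i"
| "Mw (i # j # ws) f = wprod (f i) (Mw (j # ws) f)"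

definition lin_tree :: "nat list \<Rightarrow> (nat \<times> nat) set" where
  "lin_tree w = {(w ! m, w ! (m + 1)) | m. m + 1 < length w}"

text \<open>Fh k E f v is F(\<tau>_v) evaluated at the family f, computed with recursion
  fuel k; the fuel is irrelevant once it exceeds the depth of \<tau>_v. The k-fold
  sum over (j_1,...,j_k) is a sum over maps J from the children to the index type;
  the partial derivatives are taken in the (sorted) order of the children.\<close>
fun Fh :: "nat \<Rightarrow> (nat \<times> nat) set \<Rightarrow> (nat \<Rightarrow> 'd::finite vf) \<Rightarrow> nat \<Rightarrow> 'd vf" where
  "Fh 0 E f v = f v"
| "Fh (Suc k) E f v = (\<lambda>x.
     \<Sum>J\<in>PiE (children E v) (\<lambda>_. UNIV).
       (\<Prod>c\<in>children E v. Fh k E f c x $ J c) *\<^sub>R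
       partials (map J (sorted_list_of_set (children E v))) (f v) x)"

definition elem_diff :: "nat set \<Rightarrow> (nat \<times> nat) set \<Rightarrow> (nat \<Rightarrow> 'd::finite vf) \<Rightarrow> 'd vf" where
  "elem_diff V E f = Fh (card V) E f (tree_root V E)"

definition left_identity :: "nat \<Rightarrow> (nat list \<Rightarrow> real) \<Rightarrow> 'd::finite itself \<Rightarrow> bool" where
  "left_identity n lam TYPE('d) \<longleftrightarrow>
     (\<forall>f :: nat \<Rightarrow> 'd vf. (\<forall>i\<in>{1..n}. witt (f i)) \<longrightarrow>
        (\<forall>x. (\<Sum>w\<in>permutations_of_set {1..n}. lam w *\<^sub>R Mw w f x) = 0))"

end

theory Submission
  imports Defs
begin


lemma perm_set_iff: "w \<in> permutations_of_set A \<longleftrightarrow> set w = A \<and> distinct w"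
  by (simp add: permutations_of_set_def)

lemma lin_tree_mem: "(a,b) \<in> lin_tree w \<longleftrightarrow> (\<exists>m. m + 1 < length w \<and> a = w!m \<and> b = w!(m+1))"
  unfolding lin_tree_def by auto

lemma lin_tree_inj:
  assumes w: "distinct w" "set w = V" and v: "distinct v" "set v = V"
    and eq: "lin_tree w = lin_tree v"
  shows "w = v"
proof -
  have "length w = card V" using w distinct_card by fastforce
  moreover have "length v = card V" using v distinct_card by fastforce
  ultimately have len: "length w = length v" by simp
  have "w ! m = v ! m" if "m < length w" for m
    using that
  proof (induction m)
    case 0
    then have "w!0 \<in> set v" using w(2) v(2) nth_mem by metis
    then obtain k where k: "k < length v" "v!k = w!0" by (metis in_set_conv_nth)
    show ?case
    proof (cases k)
      case 0 then show ?thesis using k by simp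
    next
      case (Suc k')
      then have "(v!k', w!0) \<in> lin_tree v" using k unfolding lin_tree_mem by auto
      then have "(v!k', w!0) \<in> lin_tree w" using eq by simp
      then obtain m where mm: "m+1 < length w" "w!0 = w!(m+1)" unfolding lin_tree_mem by auto
      have "w!0 = w!(m+1) \<longleftrightarrow> 0 = m+1" by (rule nth_eq_iff_index_eq[OF w(1)]) (use mm in auto)
      then have "0 = m+1" using mm(2) by blast
      then show ?thesis by simp
    qed
  next
    case (Suc m)
    then have "(w!m, w!Suc m) \<in> lin_tree w" unfolding lin_tree_mem by auto
    then have "(w!m, w!Suc m) \<in> lin_tree v" using eq by simp
    then obtain m' where m': "m'+1 < length v" "w!m = v!m'" "w!Suc m = v!(m'+1)"
      unfolding lin_tree_mem by auto
    have "v!m = v!m'" using Suc m' by simp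
    then have "m = m'" using nth_eq_iff_index_eq[OF v(1), of m m'] m' Suc.prems len by simp
    then show ?case using m' by simp
  qed
  then show ?thesis using len by (metis nth_equalityI)
qed

lemma dist_nth: "distinct w \<Longrightarrow> i < length w \<Longrightarrow> j < length w \<Longrightarrow> w!i = w!j \<Longrightarrow> i = j"
  using nth_eq_iff_index_eq by blast

lemma lin_tree_root:
  assumes "distinct w" "w \<noteq> []"
  shows "is_tree_root (set w) (lin_tree w) r \<longleftrightarrow> r = w!0"
proof
  assume r: "is_tree_root (set w) (lin_tree w) r"
  then obtain k where k: "k < length w" "r = w!k" unfolding is_tree_root_def by (metis in_set_conv_nth)
  show "r = w!0"
  proof (cases k)
    case (Suc k')
    then have "(w!k', r) \<in> lin_tree w" using k unfolding lin_tree_mem by auto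
    then show ?thesis using r unfolding is_tree_root_def by blast
  qed (use k in simp)
next
  assume r: "r = w!0"
  have "(u, w!0) \<notin> lin_tree w" for u
  proof
    assume "(u, w!0) \<in> lin_tree w"
    then obtain m where m: "m+1 < length w" "w!0 = w!(m+1)" unfolding lin_tree_mem by auto
    have "0 = m+1" by (rule dist_nth[OF assms(1)]) (use m in auto)
    then show False by simp
  qed
  then show "is_tree_root (set w) (lin_tree w) r"
    using assms r unfolding is_tree_root_def by auto
qed

lemma lin_tree_rooted:
  assumes "distinct w" "w \<noteq> []"
  shows "rooted_tree (set w) (lin_tree w)" "linear_tree (lin_tree w)"
    "tree_root (set w) (lin_tree w) = w!0"
proof -
  note R = lin_tree_root[OF assms]
  show "tree_root (set w) (lin_tree w) = w!0" unfolding tree_root_def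
    by (rule the_equality) (simp_all add: R)
  have sub: "lin_tree w \<subseteq> set w \<times> set w"
  proof
    fix p assume "p \<in> lin_tree w"
    then obtain m where "m+1 < length w" "p = (w!m, w!(m+1))" unfolding lin_tree_def by blast
    then show "p \<in> set w \<times> set w" by simp
  qed
  have par: "\<exists>!u. (u, v) \<in> lin_tree w" if vv: "v \<in> set w" "v \<noteq> w!0" for v
  proof -
    obtain k where k0: "k < length w" "w!k = v" using vv(1) by (auto simp: in_set_conv_nth)
    then have k: "k < length w" "v = w!k" by simp_all
    have "k \<noteq> 0"
    proof
      assume "k = 0" then show False using k0 vv(2) by simp
    qed
    then obtain k' where k': "k = Suc k'" using not0_implies_Suc by blast
    show ?thesis
    proof
      show "(w!k', v) \<in> lin_tree w" using k k' unfolding lin_tree_mem by auto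
      fix u assume "(u, v) \<in> lin_tree w"
      then obtain m where m: "m+1 < length w" "u = w!m" "v = w!(m+1)" unfolding lin_tree_mem by auto
      have "m + 1 = k" by (rule dist_nth[OF assms(1)]) (use m k in auto)
      then show "u = w!k'" using m k' by simp
    qed
  qed
  have reach: "(w!0, w!k) \<in> (lin_tree w)\<^sup>*" if "k < length w" for k
    using that
  proof (induction k)
    case (Suc k)
    then have "(w!k, w!Suc k) \<in> lin_tree w" unfolding lin_tree_mem by auto
    with Suc show ?case by (meson Suc_lessD rtrancl.rtrancl_into_rtrancl)
  qed simp
  have reach': "(w!0, v) \<in> (lin_tree w)\<^sup>*" if "v \<in> set w" for v
    using reach that by (metis in_set_conv_nth)
  have root1: "\<exists>!r. is_tree_root (set w) (lin_tree w) r" unfolding R by simp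
  show "rooted_tree (set w) (lin_tree w)"
    unfolding rooted_tree_def
  proof (intro conjI ballI allI impI)
    show "\<exists>!u. (u, v) \<in> lin_tree w" if "v \<in> set w" "\<not> is_tree_root (set w) (lin_tree w) v" for v
      using par that by (simp add: R)
    show "(r, v) \<in> (lin_tree w)\<^sup>*" if "is_tree_root (set w) (lin_tree w) r" "v \<in> set w" for r v
      using reach' that by (simp add: R)
  qed (simp_all add: sub root1)
  show "linear_tree (lin_tree w)"
    unfolding linear_tree_def
  proof (intro allI impI)
    fix v a b assume "(v, a) \<in> lin_tree w" "(v, b) \<in> lin_tree w"
    then obtain m m' where mm: "m+1 < length w" "v = w!m" "a = w!(m+1)"
       "m'+1 < length w" "v = w!m'" "b = w!(m'+1)" unfolding lin_tree_mem by auto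
    have "m = m'" by (rule dist_nth[OF assms(1)]) (use mm in auto)
    then show "a = b" using mm by simp
  qed
qed



lemma linear_tree_is_lin:
  assumes rt: "rooted_tree V E" and lin: "linear_tree E" and cV: "card V = n"
  shows "\<exists>w. distinct w \<and> set w = V \<and> E = lin_tree w"
proof -
  have finV: "finite V" and sub: "E \<subseteq> V \<times> V" and ex1: "\<exists>!r. is_tree_root V E r"
    and par: "\<And>v. v \<in> V \<Longrightarrow> \<not> is_tree_root V E v \<Longrightarrow> \<exists>!u. (u, v) \<in> E"
    and rch: "\<And>r v. is_tree_root V E r \<Longrightarrow> v \<in> V \<Longrightarrow> (r, v) \<in> E\<^sup>*"
    using rt unfolding rooted_tree_def by blast+
  obtain r where root: "is_tree_root V E r" using ex1 by blast
  have rV: "r \<in> V" and rnp: "\<And>u. (u, r) \<notin> E" using root unfolding is_tree_root_def by auto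
  have upar: "u = u'" if "(u, v) \<in> E" "(u', v) \<in> E" for u u' v
  proof -
    have vV: "v \<in> V" using that sub by auto
    have "\<not> is_tree_root V E v" using that unfolding is_tree_root_def by blast
    then show ?thesis using par[OF vV] that by blast
  qed
  define nx where "nx v = (THE c. (v, c) \<in> E)" for v
  have nxI: "nx v = c" if "(v, c) \<in> E" for v c
    unfolding nx_def
  proof (rule the_equality)
    show "(v, c) \<in> E" by (rule that)
    fix c' assume "(v, c') \<in> E" then show "c' = c" using lin that unfolding linear_tree_def by blast
  qed
  define p where "p k = (nx ^^ k) r" for k
  have p0: "p 0 = r" and pS: "\<And>k. p (Suc k) = nx (p k)" unfolding p_def by simp_all
  define S where "S m \<longleftrightarrow> (\<forall>i<m. (p i, p (Suc i)) \<in> E)" for m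
  have S0: "S 0" unfolding S_def by simp
  have Smono: "S k" if "S m" "k \<le> m" for k m using that unfolding S_def by auto
  have pV: "p k \<in> V" if "S m" "k \<le> m" for k m
    using that
  proof (induction k)
    case 0 then show ?case using p0 rV by simp
  next
    case (Suc k)
    then have "(p k, p (Suc k)) \<in> E" unfolding S_def by auto
    then show ?case using sub by auto
  qed
  have reach: "\<exists>m. S m \<and> v = p m" if "(r, v) \<in> E\<^sup>*" for v
    using that
  proof (induction rule: rtrancl_induct)
    case base then show ?case using S0 p0 by auto
  next
    case (step y z)
    then obtain m where m: "S m" "y = p m" by blast
    have "p (Suc m) = z" using pS nxI step(2) m(2) by simp
    moreover have "S (Suc m)" using m step(2) calculation unfolding S_def by (auto simp: less_Suc_eq)
    ultimately show ?case by blast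
  qed
  have dist: "p i \<noteq> p j" if "S m" "i < j" "j \<le> m" for i j m
    using that
  proof (induction i arbitrary: j)
    case 0
    then obtain j' where j': "j = Suc j'" by (cases j) auto
    then have "(p j', p j) \<in> E" using 0 unfolding S_def by auto
    then show ?case using rnp p0 by metis
  next
    case (Suc i)
    then obtain j' where j': "j = Suc j'" by (cases j) auto
    have e1: "(p i, p (Suc i)) \<in> E" using Suc.prems unfolding S_def by auto
    have e2: "(p j', p j) \<in> E" using Suc.prems j' unfolding S_def by auto
    have "p i \<noteq> p j'" using Suc.IH[of j'] Suc.prems j' by simp
    then show ?case using upar e1 e2 by metis
  qed
  have injp: "inj_on p {0..m}" if "S m" for m
  proof (rule inj_onI)
    fix i j assume "i \<in> {0..m}" "j \<in> {0..m}" "p i = p j"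
    then show "i = j" using dist[OF that, of i j] dist[OF that, of j i]
      by (metis atLeastAtMost_iff linorder_neqE_nat)
  qed
  have bound: "m < n" if "S m" for m
  proof -
    have "p ` {0..m} \<subseteq> V" using pV[OF that] by auto
    then have "card (p ` {0..m}) \<le> n" using cV finV card_mono by metis
    moreover have "card (p ` {0..m}) = Suc m" using card_image[OF injp[OF that]] by simp
    ultimately show ?thesis by simp
  qed
  have allV: "\<exists>k. S k \<and> v = p k" if "v \<in> V" for v
    using reach rch[OF root that] by blast
  have Sn: "S m" if "m < n" for m
    using that
  proof (induction m)
    case 0 show ?case by (rule S0)
  next
    case (Suc m)
    then have Sm: "S m" by simp
    have "\<exists>c. (p m, c) \<in> E"
    proof (rule ccontr)
      assume nc: "\<not> (\<exists>c. (p m, c) \<in> E)"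
      have "V \<subseteq> p ` {0..m}"
      proof
        fix v assume "v \<in> V"
        then obtain k where k: "S k" "v = p k" using allV by blast
        have "k \<le> m"
        proof (rule ccontr)
          assume "\<not> k \<le> m"
          then have "(p m, p (Suc m)) \<in> E" using k(1) unfolding S_def by auto
          then show False using nc by blast
        qed
        then show "v \<in> p ` {0..m}" using k by auto
      qed
      then have "card V \<le> card (p ` {0..m})" by (intro card_mono) auto
      also have "\<dots> \<le> Suc m" using card_image_le[of "{0..m}" p] by simp
      finally show False using cV Suc.prems by simp
    qed
    then obtain c where c: "(p m, c) \<in> E" by blast
    then have "p (Suc m) = c" using pS nxI by simp
    then have "(p m, p (Suc m)) \<in> E" using c by simp
    then show ?case using Sm unfolding S_def by (auto simp: less_Suc_eq)
  qed
  have n0: "n \<ge> 1" using cV finV rV by (metis One_nat_def Suc_leI card_gt_0_iff empty_iff)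
  have Sfull: "S (n - 1)" using Sn n0 by simp
  define w where "w = map p [0..<n]"
  have lw: "length w = n" unfolding w_def by simp
  have wn: "w ! m = p m" if "m < n" for m unfolding w_def using that by simp
  have injn: "inj_on p {0..<n}"
  proof -
    have "{0..<n} = {0..n-1}" using n0 by auto
    then show ?thesis using injp[OF Sfull] by simp
  qed
  have dw: "distinct w" unfolding w_def using injn by (simp add: distinct_map)
  have sw: "set w = V"
  proof -
    have "set w \<subseteq> V" unfolding w_def using pV[OF Sfull] by auto
    moreover have "card (set w) = card V" using distinct_card[OF dw] lw cV by simp
    ultimately show ?thesis using finV card_subset_eq by blast
  qed
  have "E = lin_tree w"
  proof
    show "lin_tree w \<subseteq> E"
    proof
      fix e assume "e \<in> lin_tree w"
      then obtain m where m: "m + 1 < n" "e = (p m, p (m+1))" unfolding lin_tree_def lw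
        using wn by auto
      then show "e \<in> E" using Sfull unfolding S_def by auto
    qed
    show "E \<subseteq> lin_tree w"
    proof
      fix e assume eE: "e \<in> E"
      then obtain a b where e: "e = (a, b)" "(a, b) \<in> E" by (cases e) auto
      then have aV: "a \<in> V" and bV: "b \<in> V" using sub by auto
      obtain k where k: "S k" "a = p k" using allV[OF aV] by blast
      have kn: "k < n" using bound[OF k(1)] .
      have b: "b = p (Suc k)" using pS nxI e(2) k(2) by simp
      have "k + 1 < n"
      proof (rule ccontr)
        assume "\<not> k + 1 < n"
        then have kk: "k = n - 1" using kn by simp
        obtain j where j: "S j" "b = p j" using allV[OF bV] by blast
        have jn: "j < n" using bound[OF j(1)] .
        have "j \<noteq> 0" using j e(2) rnp p0 by metis
        then obtain j' where j': "j = Suc j'" by (cases j) auto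
        have "(p j', b) \<in> E" using j j' unfolding S_def by auto
        then have "p j' = a" using upar e(2) by blast
        then have "p j' = p (n - 1)" using k kk by simp
        moreover have "j' < n - 1" using jn j' by simp
        ultimately show False using dist[OF Sfull, of j' "n-1"] by simp
      qed
      moreover have "(a, b) = (w!k, w!(k+1))" using wn[of k] wn[of "k+1"] kn calculation k(2) b by simp
      ultimately show "e \<in> lin_tree w" unfolding lin_tree_def e(1) lw by blast
    qed
  qed
  then show ?thesis using dw sw by blast
qed





lemma children_lin:
  assumes "distinct w" "m < length w"
  shows "children (lin_tree w) (w!m) = (if m + 1 < length w then {w!(m+1)} else {})"
proof -
  have "(w!m, c) \<in> lin_tree w \<longleftrightarrow> m + 1 < length w \<and> c = w!(m+1)" for c
  proof
    assume "(w!m, c) \<in> lin_tree w"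
    then obtain m' where m': "m'+1 < length w" "w!m = w!m'" "c = w!(m'+1)"
      unfolding lin_tree_def by blast
    have "m = m'" by (rule dist_nth[OF assms(1)]) (use m' assms in auto)
    then show "m + 1 < length w \<and> c = w!(m+1)" using m' by simp
  next
    assume "m + 1 < length w \<and> c = w!(m+1)"
    then show "(w!m, c) \<in> lin_tree w" unfolding lin_tree_def by blast
  qed
  then show ?thesis unfolding children_def by auto
qed

lemma sum_PiE_singleton:
  "(\<Sum>J\<in>PiE {c} (\<lambda>_. UNIV). g (J c)) = (\<Sum>i\<in>UNIV. g i)"
proof -
  have eq: "PiE {c} (\<lambda>_. UNIV) = (\<lambda>i. \<lambda>x\<in>{c}. i) ` UNIV"
    using PiE_over_singleton_iff[of c "\<lambda>_. UNIV"] by auto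
  have inj: "inj (\<lambda>i. \<lambda>x\<in>{c}. i)"
  proof (rule injI)
    fix i j assume "(\<lambda>x\<in>{c}. i) = (\<lambda>x\<in>{c}. j)"
    then have "(\<lambda>x\<in>{c}. i) c = (\<lambda>x\<in>{c}. j) c" by simp
    then show "i = j" by simp
  qed
  show ?thesis unfolding eq by (subst sum.reindex[OF inj]) simp
qed

lemma Fh_lin:
  assumes "distinct w"
  shows "m < length w \<Longrightarrow> length w - 1 - m \<le> k \<Longrightarrow> Fh k (lin_tree w) f (w!m) = Mw (drop m w) f"
proof (induction k arbitrary: m)
  case 0
  then have m: "m = length w - 1" by simp
  then have "drop m w = [w!m]" using 0 by (metis Cons_nth_drop_Suc Suc_diff_1 drop_all gr_implies_not0 le_refl neq0_conv)
  then show ?case by simp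
next
  case (Suc k)
  show ?case
  proof (cases "m + 1 < length w")
    case False
    then have "drop m w = [w!m]" using Suc.prems by (metis Cons_nth_drop_Suc Suc_eq_plus1 drop_all not_less)
    moreover have "children (lin_tree w) (w!m) = {}" using children_lin[OF assms Suc.prems(1)] False by simp
    ultimately show ?thesis by simp
  next
    case True
    have ch: "children (lin_tree w) (w!m) = {w!(m+1)}" using children_lin[OF assms Suc.prems(1)] True by simp
    have IH: "Fh k (lin_tree w) f (w!(m+1)) = Mw (drop (m+1) w) f"
      using Suc.IH[of "m+1"] True Suc.prems by simp
    have d: "drop m w = w!m # w!(m+1) # drop (m+2) w" using True
      by (metis Cons_nth_drop_Suc Suc_eq_plus1 add_2_eq_Suc' add_lessD1)
    have d1: "drop (m+1) w = w!(m+1) # drop (m+2) w" using True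
      by (metis Cons_nth_drop_Suc Suc_eq_plus1 add_2_eq_Suc')
    show ?thesis
    proof
      fix x
      have "Fh (Suc k) (lin_tree w) f (w!m) x =
        (\<Sum>J\<in>PiE {w!(m+1)} (\<lambda>_. UNIV). Fh k (lin_tree w) f (w!(m+1)) x $ J (w!(m+1)) *\<^sub>R
            partial (J (w!(m+1))) (f (w!m)) x)"
        unfolding Fh.simps ch by simp
      also have "\<dots> = (\<Sum>i\<in>UNIV. Fh k (lin_tree w) f (w!(m+1)) x $ i *\<^sub>R partial i (f (w!m)) x)"
        by (rule sum_PiE_singleton)
      also have "\<dots> = Mw (drop m w) f x"
        unfolding d IH Mw.simps wprod_def d1 by simp
      finally show "Fh (Suc k) (lin_tree w) f (w!m) x = Mw (drop m w) f x" .
    qed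
  qed
qed



lemma Mw_local:
  assumes "\<And>i. f i x = g i x" "\<And>i j. partial j (f i) x = partial j (g i) x"
  shows "Mw w f x = Mw w g x"
proof (induction w rule: induct_list012)
  case (3 i j ws)
  then show ?case using assms by (simp add: wprod_def)
qed (use assms in simp_all)

definition aff :: "real^'d::finite \<Rightarrow> real^'d \<Rightarrow> ('d \<Rightarrow> real^'d) \<Rightarrow> 'd vf" where
  "aff x a c = (\<lambda>y. a + (\<Sum>k\<in>UNIV. (y$k - x$k) *\<^sub>R c k))"

lemma aff_line: "aff x a c (y + t *\<^sub>R axis j 1) = aff x a c y + t *\<^sub>R c j"
proof -
  have "(\<Sum>k\<in>UNIV. ((y + t *\<^sub>R axis j 1)$k - x$k) *\<^sub>R c k)
      = (\<Sum>k\<in>UNIV. (y$k - x$k) *\<^sub>R c k + (if k = j then t *\<^sub>R c k else 0))"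
    by (rule sum.cong) (auto simp: axis_def algebra_simps)
  also have "\<dots> = (\<Sum>k\<in>UNIV. (y$k - x$k) *\<^sub>R c k) + t *\<^sub>R c j"
    by (simp add: sum.distrib)
  finally show ?thesis unfolding aff_def by (simp add: algebra_simps)
qed

lemma aff_deriv: "((\<lambda>t. aff x a c (y + t *\<^sub>R axis j 1)) has_vector_derivative c j) (at 0)"
  unfolding aff_line
  by (auto intro!: derivative_eq_intros)

lemma partial_aff: "partial j (aff x a c) = aff x (c j) (\<lambda>_. 0)"
proof
  fix y
  have "partial j (aff x a c) y = c j"
    unfolding partial_def by (rule vector_derivative_at[OF aff_deriv])
  then show "partial j (aff x a c) y = aff x (c j) (\<lambda>_. 0) y" by (simp add: aff_def)
qed

lemma partials_aff: "\<exists>a' c'. partials js (aff x a c) = aff x a' c'"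
proof (induction js)
  case Nil then show ?case by auto
next
  case (Cons j js)
  then obtain a' c' where "partials js (aff x a c) = aff x a' c'" by blast
  then have "partials (j#js) (aff x a c) = aff x (c' j) (\<lambda>_. 0)" by (simp add: partial_aff)
  then show ?case by blast
qed

lemma aff_cont: "continuous_on UNIV (aff x a c)"
  unfolding aff_def by (intro continuous_intros)

lemma smooth_aff: "smooth (aff x a c)"
  unfolding smooth_def
proof (intro allI conjI)
  fix js :: "'a list" and j y
  obtain a' c' where e: "partials js (aff x a c) = aff x a' c'" using partials_aff by blast
  show "continuous_on UNIV (partials js (aff x a c))" unfolding e by (rule aff_cont)
  have "partials (j # js) (aff x a c) = aff x (c' j) (\<lambda>_. 0)" using e by (simp add: partial_aff)
  then have "partials (j # js) (aff x a c) y = c' j" by (simp add: aff_def)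
  then show "((\<lambda>t. partials js (aff x a c) (y + t *\<^sub>R axis j 1)) has_vector_derivative
               partials (j # js) (aff x a c) y) (at 0)"
    unfolding e using aff_deriv by simp
qed

lemma poly_fun_cong: "poly_fun p \<Longrightarrow> (\<And>y. p y = q y) \<Longrightarrow> poly_fun q"
proof -
  assume "poly_fun p" "\<And>y. p y = q y"
  moreover have "p = q" using calculation(2) by (rule ext)
  ultimately show ?thesis by simp
qed

lemma poly_fun_sum: "finite I \<Longrightarrow> (\<And>i. i \<in> I \<Longrightarrow> poly_fun (h i)) \<Longrightarrow> poly_fun (\<lambda>y. \<Sum>i\<in>I. h i y)"
proof (induction I rule: finite_induct)
  case empty
  show ?case by (simp add: pf_const)
next
  case (insert a F)
  have "poly_fun (\<lambda>y. h a y + (\<Sum>i\<in>F. h i y))"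
    by (rule pf_add) (use insert in auto)
  then show ?case using insert by simp
qed

lemma witt_aff: "witt (aff x a c)"
  unfolding witt_def
proof
  fix k
  have "poly_fun (\<lambda>y. a $ k + (\<Sum>i\<in>UNIV. y $ i * (c i $ k) + - (x $ i * c i $ k)))"
    by (intro pf_add pf_const poly_fun_sum pf_mult pf_coord) auto
  then show "poly_fun (\<lambda>y. aff x a c y $ k)"
    by (rule poly_fun_cong) (simp add: aff_def sum_component algebra_simps)
qed

lemma aff_at: "aff x a c x = a" by (simp add: aff_def)


theorem proposition4p5:
  fixes n :: nat
  assumes "n \<ge> 1"
  shows "bij_betw lin_tree (permutations_of_set {1..n}) {E \<in> RT n. linear_tree E}
    \<and> (\<forall>w\<in>permutations_of_set {1..n}. \<forall>f :: nat \<Rightarrow> 'd::finite vf.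
          (\<forall>i\<in>{1..n}. smooth (f i)) \<longrightarrow> elem_diff {1..n} (lin_tree w) f = Mw w f)
    \<and> (\<forall>lam :: nat list \<Rightarrow> real.
          left_identity n lam TYPE('d) \<longleftrightarrow>
          (\<forall>f :: nat \<Rightarrow> 'd vf. (\<forall>i\<in>{1..n}. smooth (f i)) \<longrightarrow>
             (\<forall>x. (\<Sum>w\<in>permutations_of_set {1..n}.
                     lam w *\<^sub>R elem_diff {1..n} (lin_tree w) f x) = 0)))"
proof -
  let ?P = "permutations_of_set {1..n}"
  have Pw: "distinct w \<and> set w = {1..n} \<and> w \<noteq> [] \<and> length w = n" if "w \<in> ?P" for w
  proof -
    have d: "distinct w" and s: "set w = {1..n}" using that by (simp_all add: perm_set_iff)
    have "1 \<in> set w" using s assms by simp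
    then have "w \<noteq> []" by auto
    moreover have "length w = n" using distinct_card[OF d] s by simp
    ultimately show ?thesis using d s by simp
  qed
  have inj: "inj_on lin_tree ?P"
  proof (rule inj_onI)
    fix w v assume "w \<in> ?P" "v \<in> ?P" "lin_tree w = lin_tree v"
    then show "w = v" using lin_tree_inj[of w "{1..n}" v] Pw by blast
  qed
  have img: "lin_tree ` ?P = {E \<in> RT n. linear_tree E}"
  proof
    show "lin_tree ` ?P \<subseteq> {E \<in> RT n. linear_tree E}"
    proof
      fix E assume "E \<in> lin_tree ` ?P"
      then obtain w where w: "w \<in> ?P" "E = lin_tree w" by blast
      have w': "distinct w" "set w = {1..n}" "w \<noteq> []" using Pw[OF w(1)] by simp_all
      show "E \<in> {E \<in> RT n. linear_tree E}"
        using lin_tree_rooted[OF w'(1,3)] w(2) w'(2) unfolding RT_def by simp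
    qed
    show "{E \<in> RT n. linear_tree E} \<subseteq> lin_tree ` ?P"
    proof
      fix E assume "E \<in> {E \<in> RT n. linear_tree E}"
      then have "rooted_tree {1..n} E" "linear_tree E" unfolding RT_def by simp_all
      then obtain w where "distinct w" "set w = {1..n}" "E = lin_tree w"
        using linear_tree_is_lin[of "{1..n}" E n] by auto
      then show "E \<in> lin_tree ` ?P" by (auto simp: perm_set_iff)
    qed
  qed
  have bij: "bij_betw lin_tree ?P {E \<in> RT n. linear_tree E}"
    unfolding bij_betw_def using inj img by simp
  have ed: "elem_diff {1..n} (lin_tree w) f = Mw w f" if "w \<in> ?P" for w and f :: "nat \<Rightarrow> 'd vf"
  proof -
    have w': "distinct w" "set w = {1..n}" "w \<noteq> []" "length w = n" using Pw[OF that] by simp_all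
    have tr: "tree_root {1..n} (lin_tree w) = w!0" using lin_tree_rooted(3)[OF w'(1,3)] w'(2) by simp
    have "Fh n (lin_tree w) f (w!0) = Mw (drop 0 w) f"
      by (rule Fh_lin[OF w'(1)]) (use w' in auto)
    then show ?thesis unfolding elem_diff_def tr by simp
  qed
  define G where "G f x = (\<lambda>i. aff x (f i x) (\<lambda>j. partial j (f i) x))"
    for f :: "nat \<Rightarrow> 'd vf" and x
  have GM: "Mw w f x = Mw w (G f x) x" for w f x
    by (rule Mw_local) (simp_all add: G_def aff_at partial_aff)
  have Gw: "witt (G f x i)" for f x i unfolding G_def by (rule witt_aff)
  have Gs: "smooth (G f x i)" for f x i unfolding G_def by (rule smooth_aff)
  have p3: "left_identity n lam TYPE('d) \<longleftrightarrow>
          (\<forall>f :: nat \<Rightarrow> 'd vf. (\<forall>i\<in>{1..n}. smooth (f i)) \<longrightarrow>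
             (\<forall>x. (\<Sum>w\<in>?P. lam w *\<^sub>R elem_diff {1..n} (lin_tree w) f x) = 0))" for lam
  proof
    assume LI: "left_identity n lam TYPE('d)"
    show "\<forall>f :: nat \<Rightarrow> 'd vf. (\<forall>i\<in>{1..n}. smooth (f i)) \<longrightarrow>
             (\<forall>x. (\<Sum>w\<in>?P. lam w *\<^sub>R elem_diff {1..n} (lin_tree w) f x) = 0)"
    proof (intro allI impI)
      fix f :: "nat \<Rightarrow> 'd vf" and x
      have "(\<Sum>w\<in>?P. lam w *\<^sub>R elem_diff {1..n} (lin_tree w) f x)
          = (\<Sum>w\<in>?P. lam w *\<^sub>R Mw w (G f x) x)"
      proof (rule sum.cong)
        fix w assume "w \<in> ?P"
        then show "lam w *\<^sub>R elem_diff {1..n} (lin_tree w) f x = lam w *\<^sub>R Mw w (G f x) x"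
          by (simp only: ed GM[of w f x])
      qed simp
      also have "\<dots> = 0" using LI Gw unfolding left_identity_def by blast
      finally show "(\<Sum>w\<in>?P. lam w *\<^sub>R elem_diff {1..n} (lin_tree w) f x) = 0" .
    qed
  next
    assume H: "\<forall>f :: nat \<Rightarrow> 'd vf. (\<forall>i\<in>{1..n}. smooth (f i)) \<longrightarrow>
             (\<forall>x. (\<Sum>w\<in>?P. lam w *\<^sub>R elem_diff {1..n} (lin_tree w) f x) = 0)"
    show "left_identity n lam TYPE('d)"
      unfolding left_identity_def
    proof (intro allI impI)
      fix f :: "nat \<Rightarrow> 'd vf" and x
      have "(\<Sum>w\<in>?P. lam w *\<^sub>R Mw w f x)
          = (\<Sum>w\<in>?P. lam w *\<^sub>R elem_diff {1..n} (lin_tree w) (G f x) x)"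
      proof (rule sum.cong)
        fix w assume "w \<in> ?P"
        then show "lam w *\<^sub>R Mw w f x = lam w *\<^sub>R elem_diff {1..n} (lin_tree w) (G f x) x"
          by (simp only: ed GM[of w f x])
      qed simp
      also have "\<dots> = 0" using H Gs by blast
      finally show "(\<Sum>w\<in>?P. lam w *\<^sub>R Mw w f x) = 0" .
    qed
  qed
  show ?thesis using bij ed p3 by blast
qed

end
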